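(* Let $p\in(0,1/2)$, $\beta<0$, $\alpha=\frac{2}{2-p}$, $\gamma_\beta=\big[\frac{3}{|\beta|(p+1)}\big]^{1/3}$, $q\in(\frac{p+1}{3},1)$ and $\delta>0$. Let $\zeta\in C([0,\delta])$ satisfy: - $\zeta(0)=0$; - $|\zeta(\varphi)-\gamma_\beta\varphi^{(p+1)/3}|\le\varphi^q$ on $[0,\delta]$; - on $(0,\delta]$, $$\zeta'=\frac{\alpha^2\zeta+\varphi^p\zeta^{-1}}{\alpha(\alpha-1)\varphi-\beta\zeta}\qquad(\ast).$$ Then $\zeta$ extends to a solution of $(\ast)$ on $(0,\infty)$ that is positive and monotone increasing.
   Context: Such a $\zeta$ exists (as a fixed point of the map defined by $\zeta'=(\alpha^2\xi+\varphi^p\xi^{-1})/(\alpha(\alpha-1)\varphi-\beta\xi)$, $\zeta(0)=0$) when $q$ is close to $1$ and $\delta$ is small. *)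

theory Defs
  imports "HOL-Analysis.Analysis"
begin

end

theory Submission
  imports Defs
begin


lemma prim_deriv:
  fixes g :: "real \<Rightarrow> real"
  assumes "continuous_on {a..} g" "a \<le> x"
  shows "((\<lambda>y. integral {a..y} g) has_real_derivative g x) (at x within {a..})"
proof -
  have c: "continuous_on {a..x+1} g" using assms(1) by (rule continuous_on_subset) auto
  have "((\<lambda>y. integral {a..y} g) has_real_derivative g x) (at x within {a..x+1})"
    by (rule integral_has_real_derivative[OF c]) (use assms in auto)
  moreover have "at x within {a..x+1} = at x within {a..}"
    by (rule at_within_nhd[where S="{..<x+1}"]) auto
  ultimately show ?thesis by simp
qed

lemma prim_cont:
  fixes g :: "real \<Rightarrow> real"
  assumes "continuous_on {a..} g"
  shows "continuous_on UNIV (\<lambda>t. integral {a..max a t} g)"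
proof -
  have "continuous_on {a..} (\<lambda>y. integral {a..y} g)"
    unfolding continuous_on_eq_continuous_within
    using prim_deriv[OF assms] by (meson DERIV_continuous atLeast_iff)
  then show ?thesis
    by (rule continuous_on_compose2[of _ _ UNIV "\<lambda>t. max a t"]) (auto intro!: continuous_intros)
qed

lemma exp_int:
  fixes K :: real
  assumes "K > 0" "a \<le> c"
  shows "((\<lambda>s. exp (K * (s - a))) has_integral (exp (K*(c-a)) - 1) / K) {a..c}"
proof -
  have "((\<lambda>s. exp (K * (s - a))) has_integral ((\<lambda>s. exp (K*(s-a)) / K) c - (\<lambda>s. exp (K*(s-a)) / K) a)) {a..c}"
    apply (rule fundamental_theorem_of_calculus[OF assms(2)])
    using assms(1) by (auto intro!: derivative_eq_intros simp: has_real_derivative_iff_has_vector_derivative[symmetric])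
  then show ?thesis by (simp add: diff_divide_distrib)
qed

lemma ode_exists:
  fixes F :: "real \<Rightarrow> real \<Rightarrow> real"
  assumes FC: "\<And>u. continuous_on {a..} u \<Longrightarrow> continuous_on {a..} (\<lambda>s. F s (u s))"
    and FB: "\<And>t z. a \<le> t \<Longrightarrow> \<bar>F t z\<bar> \<le> M"
    and FL: "\<And>t x y. a \<le> t \<Longrightarrow> \<bar>F t x - F t y\<bar> \<le> L * \<bar>x - y\<bar>"
    and L: "L > 0"
  shows "\<exists>u. u a = z0 \<and> (\<forall>t\<ge>a. (u has_real_derivative F t (u t)) (at t within {a..}))"
proof -
  define K where "K = 2*L"
  define E where "E t = exp (K * (max a t - a))" for t
  define G where "G v s = F s (E s * apply_bcontfun v s)" for v :: "real \<Rightarrow>\<^sub>C real" and s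
  define T' where "T' v t = (z0 + integral {a..max a t} (G v)) / E t" for v t
  have Kpos: "K > 0" using L by (simp add: K_def)
  have Epos: "E t > 0" for t by (simp add: E_def)
  have Econt: "continuous_on UNIV E" unfolding E_def by (intro continuous_intros)
  have Mnn: "M \<ge> 0" using FB[of a 0] by simp
  have GC: "continuous_on {a..} (G v)" for v
    unfolding G_def
    by (rule FC, intro continuous_on_mult continuous_on_subset[OF Econt]) auto
  have GI: "G v integrable_on {a..c}" for v c
    by (rule integrable_continuous_interval, rule continuous_on_subset[OF GC]) auto
  have intbound: "\<bar>integral {a..c} (G v)\<bar> \<le> M * (c - a)" if "a \<le> c" for v c
  proof -
    have "norm (integral {a..c} (G v)) \<le> integral {a..c} (\<lambda>_. M)"
      by (rule integral_norm_bound_integral[OF GI]) (auto simp: G_def intro!: FB)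
    then show ?thesis using that by (simp add: mult.commute)
  qed
  have Tbc: "T' v \<in> bcontfun" for v
  proof (rule bcontfun_normI)
    show "continuous_on UNIV (T' v)"
      unfolding T'_def
      by (intro continuous_intros prim_cont GC Econt) (use Epos in \<open>auto simp: less_imp_neq[symmetric]\<close>)
  next
    fix t
    define y where "y = max a t - a"
    have y0: "y \<ge> 0" by (simp add: y_def)
    have Et: "E t = exp (K*y)" by (simp add: E_def y_def)
    have I: "\<bar>integral {a..max a t} (G v)\<bar> \<le> M * y" using intbound[of "max a t" v] by (simp add: y_def)
    have e1: "exp (K*y) \<ge> 1" using y0 Kpos by simp
    have e2: "K * y \<le> exp (K*y)" using exp_ge_add_one_self[of "K*y"] by linarith
    have "\<bar>T' v t\<bar> \<le> (\<bar>z0\<bar> + M*y) / exp (K*y)"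
      unfolding T'_def Et abs_divide using I abs_triangle_ineq[of z0 "integral {a..max a t} (G v)"]
      by (subst abs_of_pos[of "exp (K*y)"], simp, intro divide_right_mono) auto
    also have "\<dots> = \<bar>z0\<bar> / exp (K*y) + M * y / exp (K*y)" by (simp add: add_divide_distrib)
    also have "\<bar>z0\<bar> / exp (K*y) \<le> \<bar>z0\<bar>" using e1 mult_left_mono[OF e1, of "\<bar>z0\<bar>"] by (simp add: divide_le_eq)
    also have "M * y / exp (K*y) \<le> M / K"
    proof -
      have "M * y * K \<le> M * exp (K*y)" using mult_left_mono[OF e2 Mnn] by (simp add: algebra_simps)
      then show ?thesis using Kpos by (simp add: divide_le_eq le_divide_eq mult.commute)
    qed
    finally show "norm (T' v t) \<le> \<bar>z0\<bar> + M / K" by simp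
  qed
  define T :: "(real \<Rightarrow>\<^sub>C real) \<Rightarrow> (real \<Rightarrow>\<^sub>C real)" where "T v = Bcontfun (T' v)" for v
  have Tapp: "apply_bcontfun (T v) = T' v" for v by (simp add: T_def Bcontfun_inverse Tbc)
  have contr: "dist (T v) (T w) \<le> 1/2 * dist v w" for v w
  proof (rule dist_bound)
    fix t
    define c where "c = max a t"
    define d where "d = dist v w"
    have ac: "a \<le> c" by (simp add: c_def)
    have d0: "d \<ge> 0" by (simp add: d_def)
    have Et: "E t = exp (K*(c-a))" by (simp add: E_def c_def)
    have Tdiff: "T' v t - T' w t = integral {a..c} (\<lambda>s. G v s - G w s) / E t"
      unfolding T'_def c_def by (simp add: integral_diff[OF GI GI] diff_divide_distrib add_divide_distrib)
    have eint: "((\<lambda>s. L * d * exp (K * (s - a))) has_integral L * d * ((exp (K*(c-a)) - 1) / K)) {a..c}"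
      by (rule has_integral_mult_right, rule exp_int[OF Kpos ac])
    have "norm (integral {a..c} (\<lambda>s. G v s - G w s)) \<le> integral {a..c} (\<lambda>s. L * d * exp (K * (s - a)))"
    proof (rule integral_norm_bound_integral)
      show "(\<lambda>s. G v s - G w s) integrable_on {a..c}" by (intro integrable_diff GI)
      show "(\<lambda>s. L * d * exp (K * (s - a))) integrable_on {a..c}" using eint by blast
      fix s assume s: "s \<in> {a..c}"
      have Es: "E s = exp (K * (s - a))" using s by (simp add: E_def)
      have "\<bar>G v s - G w s\<bar> \<le> L * \<bar>E s * v s - E s * w s\<bar>"
        unfolding G_def using s by (intro FL) auto
      also have "\<dots> = L * E s * \<bar>v s - w s\<bar>" using Epos[of s] L
        by (simp add: right_diff_distrib[symmetric] abs_mult)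
      also have "\<bar>v s - w s\<bar> \<le> d" unfolding d_def using dist_bounded[of v s w] by (simp add: dist_real_def)
      hence "L * E s * \<bar>v s - w s\<bar> \<le> L * E s * d" using Epos[of s] L by (simp add: mult_left_mono)
      finally show "norm (G v s - G w s) \<le> L * d * exp (K * (s - a))" by (simp add: Es mult.commute mult.left_commute)
    qed
    also have "\<dots> = L * d * ((exp (K*(c-a)) - 1) / K)" using eint by blast
    also have "\<dots> \<le> L * d * (exp (K*(c-a)) / K)" using L d0 Kpos
      by (intro mult_left_mono divide_right_mono) auto
    finally have "norm (integral {a..c} (\<lambda>s. G v s - G w s)) / E t \<le> L * d * (exp (K*(c-a)) / K) / E t"
      using Epos[of t] by (intro divide_right_mono) auto
    also have "\<dots> = 1/2 * d" unfolding Et using Kpos by (simp add: K_def)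
    finally show "dist (T v t) (T w t) \<le> 1/2 * dist v w"
      unfolding Tapp dist_real_def Tdiff d_def using Epos[of t] by (simp add: abs_divide)
  qed
  obtain v where hfix: "T v = v"
    using banach_fix_type[of "1/2" T] contr by auto
  define u where "u t = E t * v t" for t
  have vt: "T' v t = v t" for t using hfix Tapp by metis
  have ueq: "u t = z0 + integral {a..t} (\<lambda>s. F s (u s))" if "a \<le> t" for t
  proof -
    have "integral {a..t} (G v) = integral {a..t} (\<lambda>s. F s (u s))"
      by (rule integral_cong) (simp add: G_def u_def)
    moreover have "v t = (z0 + integral {a..t} (G v)) / E t" using vt[of t] that by (simp add: T'_def)
    ultimately show ?thesis using Epos[of t] by (simp add: u_def)
  qed
  have ucont: "continuous_on {a..} u"
    unfolding u_def by (intro continuous_on_mult continuous_on_subset[OF Econt]) auto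
  have FCu: "continuous_on {a..} (\<lambda>s. F s (u s))" by (rule FC[OF ucont])
  show ?thesis
  proof (intro exI conjI allI impI)
    show "u a = z0" using ueq[of a] by simp
    fix t assume t: "a \<le> t"
    have "((\<lambda>y. z0 + integral {a..y} (\<lambda>s. F s (u s))) has_real_derivative F t (u t)) (at t within {a..})"
      using prim_deriv[OF FCu t] by (auto intro!: derivative_eq_intros)
    then show "(u has_real_derivative F t (u t)) (at t within {a..})"
      by (rule has_field_derivative_transform_within[where d=1]) (use t ueq in auto)
  qed
qed



lemma f_pos:
  fixes A c b P \<phi> z :: real
  assumes "A > 0" "c > 0" "b > 0" "\<phi> > 0" "P \<ge> 0" "z > 0"
  shows "(A*z + P/z)/(c*\<phi> + b*z) > 0"
  using assms by (intro divide_pos_pos add_pos_nonneg) auto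

lemma f_bound:
  fixes A c b P \<phi> z \<delta> z0 \<kappa> :: real
  assumes "A > 0" "c > 0" "b > 0" "\<delta> > 0" "\<phi> \<ge> \<delta>" "P \<ge> 0" "z0 > 0" "z \<ge> z0" "P \<le> \<kappa> * \<phi>"
  shows "(A*z + P/z)/(c*\<phi> + b*z) \<le> A/b + \<kappa>/(z0*c)"
proof -
  have z: "z > 0" "\<phi> > 0" using assms by auto
  define D where "D = c*\<phi> + b*z"
  have pp: "c*\<phi> > 0" "b*z > 0" using assms z by auto
  have D1: "D \<ge> b*z" "D \<ge> c*\<phi>" "D > 0" using pp by (auto simp: D_def)
  have "(A*z + P/z)/D = A*z/D + P/(z*D)" by (simp add: add_divide_distrib)
  also have "A*z/D \<le> A*z/(b*z)" using assms z D1 by (intro divide_left_mono) auto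
  also have "A*z/(b*z) = A/b" using z by simp
  also have "P/(z*D) \<le> (\<kappa>*\<phi>)/(z0*(c*\<phi>))"
    using assms z D1 by (intro frac_le mult_mono) auto
  also have "(\<kappa>*\<phi>)/(z0*(c*\<phi>)) = \<kappa>/(z0*c)" using z by simp
  finally show ?thesis by (simp add: D_def)
qed

lemma f_lip:
  fixes A c b P \<phi> z1 z2 \<delta> z0 \<kappa> :: real
  assumes "A > 0" "c > 0" "b > 0" "\<delta> > 0" "\<phi> \<ge> \<delta>" "P \<ge> 0" "z0 > 0" "z1 \<ge> z0" "z2 \<ge> z0"
    "P \<le> \<kappa> * \<phi>"
  shows "\<bar>(A*z1 + P/z1)/(c*\<phi> + b*z1) - (A*z2 + P/z2)/(c*\<phi> + b*z2)\<bar>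
     \<le> (A/(c*\<delta>) + 3*\<kappa>/(c*z0^2)) * \<bar>z1 - z2\<bar>"
proof -
  have z: "z1 > 0" "z2 > 0" "\<phi> > 0" using assms by auto
  define D1 where "D1 = c*\<phi> + b*z1"
  define D2 where "D2 = c*\<phi> + b*z2"
  have D: "D1 \<ge> b*z1" "D1 \<ge> c*\<phi>" "D1 > 0" "D2 \<ge> b*z2" "D2 \<ge> c*\<phi>" "D2 > 0"
  proof -
    have pp: "c*\<phi> > 0" "b*z1 > 0" "b*z2 > 0" using assms z by auto
    show "D1 \<ge> b*z1" "D1 \<ge> c*\<phi>" "D1 > 0" "D2 \<ge> b*z2" "D2 \<ge> c*\<phi>" "D2 > 0"
      using pp by (auto simp: D1_def D2_def)
  qed
  have bz: "b*z0 \<le> D1" "b*z0 \<le> D2"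
  proof -
    have "b*z0 \<le> b*z1" "b*z0 \<le> b*z2" using assms by auto
    then show "b*z0 \<le> D1" "b*z0 \<le> D2" using D by linarith+
  qed
  define T1 where "T1 = A*c*\<phi>/(D1*D2)"
  define T2 where "T2 = P*c*\<phi>/(z1*z2*D1*D2)"
  define T3 where "T3 = P*b/(z2*D1*D2)"
  define T4 where "T4 = P*b/(z1*D1*D2)"
  have ident: "(A*z1 + P/z1)/D1 - (A*z2 + P/z2)/D2 = (z1 - z2) * (T1 - T2 - T3 - T4)"
  proof -
    have num: "(A*z1 + P/z1)*D2 - (A*z2 + P/z2)*D1 = (z1 - z2) * (A*c*\<phi> - P*c*\<phi>/(z1*z2) - P*b/z2 - P*b/z1)"
      using z unfolding D1_def D2_def by (simp add: field_simps)
    have "(A*z1 + P/z1)/D1 - (A*z2 + P/z2)/D2 = ((A*z1 + P/z1)*D2 - (A*z2 + P/z2)*D1)/(D1*D2)"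
      using D by (simp add: field_simps)
    also have "\<dots> = (z1 - z2) * (A*c*\<phi> - P*c*\<phi>/(z1*z2) - P*b/z2 - P*b/z1)/(D1*D2)" by (simp only: num)
    also have "\<dots> = (z1 - z2) * (T1 - T2 - T3 - T4)"
      unfolding T1_def T2_def T3_def T4_def using D z by (simp add: field_simps)
    finally show ?thesis .
  qed
  have pos: "T1 \<ge> 0" "T2 \<ge> 0" "T3 \<ge> 0" "T4 \<ge> 0"
    using z D assms unfolding T1_def T2_def T3_def T4_def by auto
  have "\<bar>T1 - T2 - T3 - T4\<bar> \<le> T1 + T2 + T3 + T4" using pos by linarith
  also have "T1 \<le> A/(c*\<delta>)"
  proof -
    have "T1 \<le> A*c*\<phi>/((c*\<phi>)*(c*\<phi>))" unfolding T1_def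
      using z D assms by (intro divide_left_mono mult_mono) auto
    also have "\<dots> = A/(c*\<phi>)" using z assms by (simp add: field_simps)
    also have "\<dots> \<le> A/(c*\<delta>)" using z assms by (intro divide_left_mono) auto
    finally show ?thesis .
  qed
  also have "T2 \<le> \<kappa>/(c*z0^2)"
  proof -
    have "T2 \<le> (\<kappa>*\<phi>)*c*\<phi>/((z0*z0)*(c*\<phi>)*(c*\<phi>))" unfolding T2_def
      using z D bz assms by (intro frac_le mult_mono) auto
    also have "\<dots> = \<kappa>/(c*z0^2)" using z assms by (simp add: field_simps power2_eq_square)
    finally show ?thesis .
  qed
  also have "T3 \<le> \<kappa>/(c*z0^2)"
  proof -
    have "T3 \<le> (\<kappa>*\<phi>)*b/(z0*(c*\<phi>)*(b*z0))" unfolding T3_def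
      using z D bz assms by (intro frac_le mult_mono) auto
    also have "\<dots> = \<kappa>/(c*z0^2)" using z assms by (simp add: field_simps power2_eq_square)
    finally show ?thesis .
  qed
  also have "T4 \<le> \<kappa>/(c*z0^2)"
  proof -
    have "T4 \<le> (\<kappa>*\<phi>)*b/(z0*(c*\<phi>)*(b*z0))" unfolding T4_def
      using z D bz assms by (intro frac_le mult_mono) auto
    also have "\<dots> = \<kappa>/(c*z0^2)" using z assms by (simp add: field_simps power2_eq_square)
    finally show ?thesis .
  qed
  finally have "\<bar>T1 - T2 - T3 - T4\<bar> \<le> A/(c*\<delta>) + 3*\<kappa>/(c*z0^2)" by simp
  then show ?thesis
    unfolding D1_def[symmetric] D2_def[symmetric] ident abs_mult
    by (simp add: mult.commute mult_left_mono)
qed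


theorem proposition7p2:
  fixes p \<beta> q \<delta> :: real and \<zeta> :: "real \<Rightarrow> real"
  assumes hp: "0 < p" "p < 1/2"
    and h\<beta>: "\<beta> < 0"
    and hq: "(p + 1) / 3 < q" "q < 1"
    and h\<delta>: "\<delta> > 0"
    and hcont: "continuous_on {0..\<delta>} \<zeta>"
    and h0: "\<zeta> 0 = 0"
    and hbound: "\<forall>\<phi>\<in>{0..\<delta>}.
        \<bar>\<zeta> \<phi> - (3 / (\<bar>\<beta>\<bar> * (p + 1))) powr (1/3) * \<phi> powr ((p + 1) / 3)\<bar> \<le> \<phi> powr q"
    and hode: "\<forall>\<phi>\<in>{0<..\<delta>}.
        (\<zeta> has_real_derivative
          (((2 / (2 - p))\<^sup>2 * \<zeta> \<phi> + \<phi> powr p / \<zeta> \<phi>) /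
           ((2 / (2 - p)) * ((2 / (2 - p)) - 1) * \<phi> - \<beta> * \<zeta> \<phi>)))
        (at \<phi> within {0..\<delta>})"
  shows "\<exists>Z :: real \<Rightarrow> real.
           (\<forall>\<phi>\<in>{0<..\<delta>}. Z \<phi> = \<zeta> \<phi>) \<and>
           (\<forall>\<phi>>0. (Z has_real_derivative
              (((2 / (2 - p))\<^sup>2 * Z \<phi> + \<phi> powr p / Z \<phi>) /
               ((2 / (2 - p)) * ((2 / (2 - p)) - 1) * \<phi> - \<beta> * Z \<phi>))) (at \<phi>)) \<and>
           (\<forall>\<phi>>0. Z \<phi> > 0) \<and>
           mono_on {0<..} Z"
proof -
  define \<alpha> where "\<alpha> = 2 / (2 - p)"
  define A where "A = \<alpha>\<^sup>2"
  define c where "c = \<alpha> * (\<alpha> - 1)"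
  define b where "b = - \<beta>"
  define f where "f \<phi> z = (((2 / (2 - p))\<^sup>2 * z + \<phi> powr p / z) /
           ((2 / (2 - p)) * ((2 / (2 - p)) - 1) * \<phi> - \<beta> * z))" for \<phi> z
  have \<alpha>1: "\<alpha> > 1" using hp by (simp add: \<alpha>_def)
  have Apos: "A > 0" "c > 0" "b > 0" using \<alpha>1 h\<beta> by (auto simp: A_def c_def b_def)
  have f_eq: "f \<phi> z = (A*z + \<phi> powr p / z)/(c*\<phi> + b*z)" for \<phi> z
    by (simp add: f_def A_def c_def b_def \<alpha>_def)
  have fpos: "f \<phi> z > 0" if "\<phi> > 0" "z > 0" for \<phi> z
    unfolding f_eq using Apos that by (intro f_pos) auto
  have hode': "(\<zeta> has_real_derivative f \<phi> (\<zeta> \<phi>)) (at \<phi> within {0..\<delta>})" if "\<phi> \<in> {0<..\<delta>}" for \<phi>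
    using hode that unfolding f_def by blast
  have hode_at: "(\<zeta> has_real_derivative f \<phi> (\<zeta> \<phi>)) (at \<phi>)" if "0 < \<phi>" "\<phi> < \<delta>" for \<phi>
  proof -
    have "at \<phi> within {0..\<delta>} = at \<phi>" using that by (intro at_within_interior) (simp add: interior_atLeastAtMost_real)
    then show ?thesis using hode'[of \<phi>] that by simp
  qed
  define \<gamma> where "\<gamma> = (3 / (\<bar>\<beta>\<bar> * (p + 1))) powr (1/3)"
  define e where "e = (p+1)/3"
  have \<gamma>pos: "\<gamma> > 0" using h\<beta> hp by (simp add: \<gamma>_def)
  have qe: "q - e > 0" using hq by (simp add: e_def)
  define \<epsilon> where "\<epsilon> = min \<delta> ((\<gamma>/2) powr (1/(q-e)))"
  have \<epsilon>pos: "\<epsilon> > 0" "\<epsilon> \<le> \<delta>" using h\<delta> \<gamma>pos by (auto simp: \<epsilon>_def)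
  have small: "\<zeta> \<phi> > 0" if "0 < \<phi>" "\<phi> \<le> \<epsilon>" for \<phi>
  proof -
    have "\<phi> powr (q-e) \<le> ((\<gamma>/2) powr (1/(q-e))) powr (q-e)"
      using that qe by (intro powr_mono2) (auto simp: \<epsilon>_def)
    also have "\<dots> = \<gamma>/2" using qe \<gamma>pos by (simp add: powr_powr)
    finally have h1: "\<phi> powr (q-e) \<le> \<gamma>/2" .
    have "\<phi> powr q = \<phi> powr e * \<phi> powr (q-e)" by (simp add: powr_add[symmetric])
    also have "\<dots> \<le> \<phi> powr e * (\<gamma>/2)" using h1 by (intro mult_left_mono) auto
    also have "\<dots> < \<gamma> * \<phi> powr e" using \<gamma>pos that by simp
    finally have "\<phi> powr q < \<gamma> * \<phi> powr e" .
    moreover have "\<bar>\<zeta> \<phi> - \<gamma> * \<phi> powr e\<bar> \<le> \<phi> powr q"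
      using hbound that \<epsilon>pos unfolding \<gamma>_def e_def by auto
    ultimately show ?thesis by linarith
  qed
  have zpos: "\<zeta> x > 0" if "0 < x" "x \<le> \<delta>" for x
  proof (cases "x \<le> \<epsilon>")
    case True then show ?thesis using small that by auto
  next
    case False
    show ?thesis
    proof (rule ccontr)
      assume neg: "\<not> \<zeta> x > 0"
      define S where "S = {\<epsilon>..x} \<inter> \<zeta> -` {..0}"
      have "continuous_on {\<epsilon>..x} \<zeta>" by (rule continuous_on_subset[OF hcont]) (use \<epsilon>pos that in auto)
      then have clS: "closed S" unfolding S_def by (intro continuous_closed_preimage) auto
      have xS: "x \<in> S" using neg False by (auto simp: S_def)
      have bdd: "bdd_below S" unfolding S_def by (rule bdd_belowI[of _ \<epsilon>]) auto
      define t0 where "t0 = Inf S"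
      have t0S: "t0 \<in> S" unfolding t0_def using closed_contains_Inf[OF _ bdd clS] xS by auto
      have t0: "\<epsilon> \<le> t0" "t0 \<le> x" "\<zeta> t0 \<le> 0" using t0S by (auto simp: S_def)
      have "\<zeta> \<epsilon> > 0" using small \<epsilon>pos by auto
      have below: "\<zeta> s > 0" if "\<epsilon> \<le> s" "s < t0" for s
      proof (rule ccontr)
        assume "\<not> \<zeta> s > 0"
        then have "s \<in> S" using that t0 by (auto simp: S_def)
        then have "t0 \<le> s" unfolding t0_def using bdd by (rule cInf_lower)
        then show False using that by simp
      qed
      have "\<zeta> \<epsilon> \<le> \<zeta> t0"
      proof (rule DERIV_nonneg_imp_increasing_open[OF t0(1)])
        fix s assume s: "\<epsilon> < s" "s < t0"
        then have "0 < s" "s < \<delta>" using \<epsilon>pos t0 that by auto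
        then show "\<exists>y. (\<zeta> has_real_derivative y) (at s) \<and> 0 \<le> y"
          using hode_at fpos below s by (meson less_imp_le order.strict_implies_order)
      next
        show "continuous_on {\<epsilon>..t0} \<zeta>" by (rule continuous_on_subset[OF hcont]) (use \<epsilon>pos t0 that in auto)
      qed
      then show False using \<open>\<zeta> \<epsilon> > 0\<close> t0 by linarith
    qed
  qed

  define z0 where "z0 = \<zeta> \<delta>"
  have z0pos: "z0 > 0" using zpos h\<delta> by (simp add: z0_def)
  define \<kappa> where "\<kappa> = \<delta> powr (p - 1)"
  have Pk: "t powr p \<le> \<kappa> * t" if "\<delta> \<le> t" for t
  proof -
    have "t powr (p-1) \<le> \<kappa>" unfolding \<kappa>_def using hp h\<delta> that by (intro powr_mono2') auto
    then have "t powr (p-1) * t \<le> \<kappa> * t" using that h\<delta> by (intro mult_right_mono) auto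
    moreover have "t powr (p-1) * t = t powr p" using that h\<delta> by (simp add: powr_diff)
    ultimately show ?thesis by simp
  qed
  define F where "F t z = f t (max z z0)" for t z
  define M where "M = A/b + \<kappa>/(z0*c)"
  define L where "L = A/(c*\<delta>) + 3*\<kappa>/(c*z0^2)"
  have Fpos: "F t z > 0" if "\<delta> \<le> t" for t z
    unfolding F_def using fpos that h\<delta> z0pos by auto
  have FB: "\<bar>F t z\<bar> \<le> M" if "\<delta> \<le> t" for t z
  proof -
    have "F t z \<le> M" unfolding F_def f_eq M_def
      using Apos h\<delta> that z0pos Pk[OF that] by (intro f_bound) auto
    then show ?thesis using Fpos[OF that, of z] by simp
  qed
  have Lpos: "L > 0" unfolding L_def \<kappa>_def using Apos h\<delta> z0pos by (intro add_pos_nonneg) auto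
  have FL: "\<bar>F t x - F t y\<bar> \<le> L * \<bar>x - y\<bar>" if "\<delta> \<le> t" for t x y
  proof -
    have "\<bar>F t x - F t y\<bar> \<le> L * \<bar>max x z0 - max y z0\<bar>" unfolding F_def f_eq L_def
      using Apos h\<delta> that z0pos Pk[OF that] by (intro f_lip) auto
    also have "\<dots> \<le> L * \<bar>x - y\<bar>" using Lpos by (intro mult_left_mono) (auto simp: max_def)
    finally show ?thesis .
  qed
  have FC: "continuous_on {\<delta>..} (\<lambda>s. F s (u s))" if uc: "continuous_on {\<delta>..} u" for u
  proof -
    have mc: "continuous_on {\<delta>..} (\<lambda>s. max (u s) z0)" by (intro continuous_intros uc)
    have mp: "max (u s) z0 > 0" for s using z0pos by simp
    have dp: "c * s + b * max (u s) z0 > 0" if "s \<in> {\<delta>..}" for s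
      using Apos h\<delta> that mp[of s] by (intro add_pos_pos) auto
    have pw: "continuous_on {\<delta>..} (\<lambda>s. s powr p)"
      by (intro continuous_on_powr' continuous_on_id continuous_on_const) (use h\<delta> in auto)
    have nz1: "\<forall>s\<in>{\<delta>..}. max (u s) z0 \<noteq> 0" using mp by (simp add: less_imp_neq[symmetric])
    have nz2: "\<forall>s\<in>{\<delta>..}. c * s + b * max (u s) z0 \<noteq> 0" using dp by (simp add: less_imp_neq[symmetric])
    show ?thesis unfolding F_def f_eq
      by (intro continuous_on_divide continuous_on_add continuous_on_mult continuous_on_const continuous_on_id mc pw nz1 nz2)
  qed
  obtain u where u0: "u \<delta> = z0" and uder: "\<And>t. \<delta> \<le> t \<Longrightarrow> (u has_real_derivative F t (u t)) (at t within {\<delta>..})"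
    using ode_exists[of \<delta> F M L z0, OF FC FB FL Lpos] by blast
  have uat: "(u has_real_derivative F t (u t)) (at t)" if "\<delta> < t" for t
  proof -
    have "at t within {\<delta>..} = at t" using that by (intro at_within_interior) (simp add: interior_real_atLeast)
    then show ?thesis using uder[of t] that by simp
  qed
  have ucont: "continuous_on {\<delta>..} u"
    unfolding continuous_on_eq_continuous_within using uder by (auto intro: DERIV_continuous)
  have uge: "u t \<ge> z0" if "\<delta> \<le> t" for t
  proof -
    have "u \<delta> \<le> u t"
    proof (rule DERIV_nonneg_imp_increasing_open[OF that])
      fix s assume "\<delta> < s" "s < t"
      then show "\<exists>y. (u has_real_derivative y) (at s) \<and> 0 \<le> y"
        using uat[of s] Fpos[of s "u s"] that by (intro exI[of _ "F s (u s)"]) auto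
    next
      show "continuous_on {\<delta>..t} u" by (rule continuous_on_subset[OF ucont]) auto
    qed
    then show ?thesis using u0 by simp
  qed
  have Fu: "F t (u t) = f t (u t)" if "\<delta> \<le> t" for t using uge[OF that] by (simp add: F_def)
  define Z where "Z \<phi> = (if \<phi> \<le> \<delta> then \<zeta> \<phi> else u \<phi>)" for \<phi>
  have Zpos: "Z \<phi> > 0" if "\<phi> > 0" for \<phi>
  proof (cases "\<phi> \<le> \<delta>")
    case True then show ?thesis using zpos that by (simp add: Z_def)
  next
    case False then show ?thesis using uge[of \<phi>] z0pos by (simp add: Z_def)
  qed
  have Zder: "(Z has_real_derivative f \<phi> (Z \<phi>)) (at \<phi>)" if "\<phi> > 0" for \<phi>
  proof -
    consider "\<phi> < \<delta>" | "\<phi> > \<delta>" | "\<phi> = \<delta>" by linarith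
    then show ?thesis
    proof cases
      case 1
      have "(Z has_real_derivative f \<phi> (\<zeta> \<phi>)) (at \<phi>)"
        by (rule has_field_derivative_transform_within_open[OF hode_at[OF that 1], of "{..<\<delta>}"])
          (use 1 in \<open>auto simp: Z_def\<close>)
      then show ?thesis using 1 by (simp add: Z_def)
    next
      case 2
      have ud: "(u has_real_derivative f \<phi> (u \<phi>)) (at \<phi>)" using uat[OF 2] Fu[of \<phi>] 2 by simp
      have "(Z has_real_derivative f \<phi> (u \<phi>)) (at \<phi>)"
        by (rule has_field_derivative_transform_within_open[OF ud, of "{\<delta><..}"]) (use 2 in \<open>auto simp: Z_def\<close>)
      then show ?thesis using 2 by (simp add: Z_def)
    next
      case 3
      have Zd: "Z \<delta> = \<zeta> \<delta>" by (simp add: Z_def)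
      have d1: "(Z has_real_derivative f \<delta> (\<zeta> \<delta>)) (at \<delta> within {0..\<delta>})"
        by (rule has_field_derivative_transform_within[OF hode'[of \<delta>], where d=1])
          (use h\<delta> in \<open>auto simp: Z_def\<close>)
      have d2: "(Z has_real_derivative f \<delta> (\<zeta> \<delta>)) (at \<delta> within {\<delta>..})"
      proof -
        have ud: "(u has_real_derivative f \<delta> (\<zeta> \<delta>)) (at \<delta> within {\<delta>..})"
          using uder[of \<delta>] u0 by (simp add: F_def z0_def)
        show ?thesis
          by (rule has_field_derivative_transform_within[OF ud, where d=1]) (use u0 in \<open>auto simp: Z_def z0_def\<close>)
      qed
      have "(Z has_real_derivative f \<delta> (\<zeta> \<delta>)) (at \<delta> within ({0..\<delta>} \<union> {\<delta>..}))"
        using d1 d2 unfolding has_field_derivative_iff Lim_within_Un by simp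
      moreover have "{0..\<delta>} \<union> {\<delta>..} = {0::real..}" using h\<delta> by auto
      moreover have "at \<delta> within {0..} = at \<delta>" using h\<delta> by (intro at_within_interior) (simp add: interior_real_atLeast)
      ultimately show ?thesis using 3 Zd by simp
    qed
  qed
  have mono: "mono_on {0<..} Z"
  proof (rule mono_onI)
    fix r s :: real assume rs: "r \<in> {0<..}" "s \<in> {0<..}" "r \<le> s"
    show "Z r \<le> Z s"
    proof (rule DERIV_nonneg_imp_increasing_open[OF rs(3)])
      fix x assume "r < x" "x < s"
      then have "x > 0" using rs by auto
      then show "\<exists>y. (Z has_real_derivative y) (at x) \<and> 0 \<le> y"
        using Zder[OF \<open>x > 0\<close>] fpos[OF \<open>x > 0\<close> Zpos[OF \<open>x > 0\<close>]] by (intro exI[of _ "f x (Z x)"]) auto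
    next
      have "\<forall>x\<in>{r..s}. isCont Z x"
      proof
        fix x assume "x \<in> {r..s}"
        then have "x > 0" using rs by auto
        then show "isCont Z x" using Zder DERIV_isCont by blast
      qed
      then show "continuous_on {r..s} Z" by (rule continuous_at_imp_continuous_on)
    qed
  qed
  show ?thesis
  proof (intro exI conjI allI impI)
    show "\<forall>\<phi>\<in>{0<..\<delta>}. Z \<phi> = \<zeta> \<phi>" by (simp add: Z_def)
    show "mono_on {0<..} Z" by (rule mono)
  next
    fix \<phi> :: real assume "\<phi> > 0"
    then show "(Z has_real_derivative
              (((2 / (2 - p))\<^sup>2 * Z \<phi> + \<phi> powr p / Z \<phi>) /
               ((2 / (2 - p)) * ((2 / (2 - p)) - 1) * \<phi> - \<beta> * Z \<phi>))) (at \<phi>)"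
      using Zder[of \<phi>] unfolding f_def by simp
  next
    fix \<phi> :: real assume "\<phi> > 0" then show "Z \<phi> > 0" by (rule Zpos)
  qed
qed

end
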